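(* Under the setting below, let $\rho^*$ be the limit of a subsequence $(\rho^{(\epsilon_n)})$, $\epsilon_n\downarrow0$, converging weakly in $L^2([0,T_m];H^m(\mathbb T^d))$ and strongly in $L^\infty([0,T_m];H^{m'}(\mathbb T^d))$ for some $d/2<m'<m$. Then $t\mapsto\|\rho^*(t)\|_{H^m}$ is right-continuous at $t=0$, with $\lim_{t\downarrow0}\|\rho^*(t)\|_{H^m}=\|\rho_0\|_{H^m}=\|\rho^*(0)\|_{H^m}$.
   Context: Torus $\mathbb T^d$, $H^m=H^m(\mathbb T^d)$. Data: $\kappa,\eta,\omega,\gamma:\mathbb T^d\to\mathbb R$, $\tau:\mathbb T^d\times\mathbb T^d\to\mathbb R$ smooth, $0\le\kappa\le1$, $\eta,\omega,\gamma,\tau\ge0$, $\int\tau(y,x)dx=1$, all derivatives bounded; $\delta>0$, $0<u^-<u^+<1$, $\tilde\rho>0$. $M(r)=\frac{u^-r}{1+r/\tilde\rho}$, $u(\kappa,\rho)=u^+-\kappa\frac{u^-}{1+\rho/\tilde\rho}$, $I[q](x)=\int\tau(y,x)q(y)dy$, $\mathcal J^{(\epsilon)}[f](x)=\sum_{k\in\mathbb Z^d}e^{-\epsilon|k|^2+2\pi ik\cdot x}\hat f(k)$. Fix an integer $m>d+3$ and $\rho_0\in H^m$ with $\underline\rho_0=\operatorname{ess\,inf}\rho_0>0$. For $\epsilon>0$, $\rho^{(\epsilon)}$ is the solution of the regularized equation $\rho_t=\delta\mathcal J^{(\epsilon)}[\Delta(u^+\mathcal J^{(\epsilon)}[\rho]-\kappa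 M(\mathcal J^{(\epsilon)}[\rho]))]+\eta-\omega\rho+I[\gamma\rho u(\kappa,\rho)]-\gamma\rho u(\kappa,\rho)$, $\rho(0)=\rho_0$. $T_m>0$ is a time independent of $\epsilon$ such that every $\rho^{(\epsilon)}$ exists in $\mathcal C^1([0,T_m];H^m)$, $\sup_{\epsilon>0,t\in[0,T_m]}\|\rho^{(\epsilon)}(t)\|_{H^m}<\infty$, $\rho^{(\epsilon)}\ge\underline\rho_0/2$, and $\tfrac12\|\rho^{(\epsilon)}(t)\|^2_{H^m}\le E_m(t)$ for a continuous $\epsilon$-independent $E_m$ with $E_m(0)=\tfrac12\|\rho_0\|^2_{H^m}$. *)

theory Defs
  imports "HOL-Analysis.Analysis"
begin

text \<open>The torus T^d is represented by the unit cube [0,1]^d in real^'d; functions on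
 the torus are functions real^'d => real, only their values on the cube (up to null sets)
 matter for the Sobolev structure. d = CARD('d).\<close>

definition tcube :: "(real^'d) set" where
  "tcube = cbox 0 One"

definition tmeas :: "(real^'d) measure" where
  "tmeas = lebesgue_on tcube"

definition kdot :: "('d::finite \<Rightarrow> int) \<Rightarrow> real^'d \<Rightarrow> real" where
  "kdot k x = (\<Sum>i\<in>UNIV. of_int (k i) * x $ i)"

definition knorm2 :: "('d::finite \<Rightarrow> int) \<Rightarrow> real" where
  "knorm2 k = (\<Sum>i\<in>UNIV. (of_int (k i))^2)"

definition fc :: "(real^'d \<Rightarrow> real) \<Rightarrow> ('d::finite \<Rightarrow> int) \<Rightarrow> complex" where
  "fc f k = integral\<^sup>L tmeas (\<lambda>x. complex_of_real (f x) * cis (- 2 * pi * kdot k x))"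

definition in_L2 :: "(real^'d::finite \<Rightarrow> real) \<Rightarrow> bool" where
  "in_L2 f \<longleftrightarrow> f \<in> borel_measurable tmeas \<and> integrable tmeas (\<lambda>x. (f x)^2)"

definition hs_sq :: "real \<Rightarrow> (real^'d::finite \<Rightarrow> real) \<Rightarrow> ennreal" where
  "hs_sq s f = (\<Sum>\<^sub>\<infinity>k. ennreal ((1 + 4 * pi^2 * knorm2 k) powr s * (cmod (fc f k))^2))"

definition in_Hs :: "real \<Rightarrow> (real^'d::finite \<Rightarrow> real) \<Rightarrow> bool" where
  "in_Hs s f \<longleftrightarrow> in_L2 f \<and> hs_sq s f < \<infinity>"

definition hs_norm :: "real \<Rightarrow> (real^'d::finite \<Rightarrow> real) \<Rightarrow> real" where
  "hs_norm s f = sqrt (enn2real (hs_sq s f))"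

definition hs_inner :: "real \<Rightarrow> (real^'d::finite \<Rightarrow> real) \<Rightarrow> (real^'d \<Rightarrow> real) \<Rightarrow> real" where
  "hs_inner s f g = (\<Sum>\<^sub>\<infinity>k. (1 + 4 * pi^2 * knorm2 k) powr s * Re (fc f k * cnj (fc g k)))"

definition Jeps :: "real \<Rightarrow> (real^'d::finite \<Rightarrow> real) \<Rightarrow> real^'d \<Rightarrow> real" where
  "Jeps eps f x = Re (\<Sum>\<^sub>\<infinity>k. complex_of_real (exp (- eps * knorm2 k)) * cis (2 * pi * kdot k x) * fc f k)"

definition Jlap :: "real \<Rightarrow> (real^'d::finite \<Rightarrow> real) \<Rightarrow> real^'d \<Rightarrow> real" where
  "Jlap eps f x = Re (\<Sum>\<^sub>\<infinity>k. complex_of_real (exp (- eps * knorm2 k) * (- 4 * pi^2 * knorm2 k))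
                        * cis (2 * pi * kdot k x) * fc f k)"

fun dpart :: "'a::euclidean_space list \<Rightarrow> ('a \<Rightarrow> real) \<Rightarrow> 'a \<Rightarrow> real" where
  "dpart [] f = f"
| "dpart (b # bs) f = (\<lambda>x. deriv (\<lambda>s. dpart bs f (x + s *\<^sub>R b)) 0)"

definition smooth_bdd :: "('a::euclidean_space \<Rightarrow> real) \<Rightarrow> bool" where
  "smooth_bdd f \<longleftrightarrow> (\<forall>bs. set bs \<subseteq> Basis \<longrightarrow>
      (\<forall>x. dpart bs f differentiable (at x)) \<and> bounded (range (dpart bs f)))"

definition periodic1 :: "('a::euclidean_space \<Rightarrow> real) \<Rightarrow> bool" where
  "periodic1 f \<longleftrightarrow> (\<forall>x. \<forall>b\<in>Basis. f (x + b) = f x)"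

definition Mfun :: "real \<Rightarrow> real \<Rightarrow> real \<Rightarrow> real" where
  "Mfun um rt r = um * r / (1 + r / rt)"

definition ufun :: "real \<Rightarrow> real \<Rightarrow> real \<Rightarrow> real \<Rightarrow> real \<Rightarrow> real" where
  "ufun up um rt k r = up - k * um / (1 + r / rt)"

definition Iop :: "((real^'d) \<times> (real^'d) \<Rightarrow> real) \<Rightarrow> (real^'d::finite \<Rightarrow> real) \<Rightarrow> real^'d \<Rightarrow> real" where
  "Iop tau q x = integral\<^sup>L tmeas (\<lambda>y. tau (y, x) * q y)"

definition rhs :: "real \<Rightarrow> real \<Rightarrow> real \<Rightarrow> real \<Rightarrow> (real^'d \<Rightarrow> real) \<Rightarrow> (real^'d \<Rightarrow> real)
   \<Rightarrow> (real^'d \<Rightarrow> real) \<Rightarrow> (real^'d \<Rightarrow> real) \<Rightarrow> ((real^'d) \<times> (real^'d) \<Rightarrow> real)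
   \<Rightarrow> real \<Rightarrow> (real^'d::finite \<Rightarrow> real) \<Rightarrow> real^'d \<Rightarrow> real" where
  "rhs delta up um rt kap eta om gam tau eps rho x =
     delta * Jlap eps (\<lambda>y. up * Jeps eps rho y - kap y * Mfun um rt (Jeps eps rho y)) x
     + eta x - om x * rho x
     + Iop tau (\<lambda>y. gam y * rho y * ufun up um rt (kap y) (rho y)) x
     - gam x * rho x * ufun up um rt (kap x) (rho x)"

text \<open>g belongs to L^2([0,T]; H^m): Fourier coefficients measurable in t (weak = strong
 measurability in a separable Hilbert space), a.e. in L^2 of the torus, and finite L^2-in-time norm.\<close>
definition L2Hs :: "real \<Rightarrow> real \<Rightarrow> (real \<Rightarrow> real^'d::finite \<Rightarrow> real) \<Rightarrow> bool" where
  "L2Hs T s g \<longleftrightarrow> (\<forall>k. (\<lambda>t. fc (g t) k) \<in> borel_measurable (lebesgue_on {0..T}))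
     \<and> (AE t in lebesgue_on {0..T}. in_L2 (g t))
     \<and> (\<integral>\<^sup>+ t. hs_sq s (g t) \<partial>(lebesgue_on {0..T})) < \<infinity>"

end

theory Submission
  imports Defs
begin


lemma tmeas_finite: "finite_measure tmeas"
  unfolding tmeas_def tcube_def by (rule finite_measure_lebesgue_on) simp

lemma cis_meas: "(\<lambda>x::real^'d::finite. cis (- 2 * pi * kdot k x)) \<in> borel_measurable tmeas"
  unfolding tmeas_def tcube_def kdot_def
  by (rule continuous_imp_measurable_on_sets_lebesgue) (auto intro!: continuous_intros)

lemma L2_int:
  assumes "in_L2 f"
  shows "integrable tmeas (\<lambda>x. complex_of_real (f x) * cis (- 2 * pi * kdot k x))"
proof -
  have fm[measurable]: "f \<in> borel_measurable tmeas" using assms unfolding in_L2_def by auto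
  have "integrable tmeas f"
    using finite_measure.square_integrable_imp_integrable[OF tmeas_finite fm] assms unfolding in_L2_def by auto
  then show ?thesis
    apply (rule Bochner_Integration.integrable_bound)
    using cis_meas[of k] fm apply (auto simp: norm_mult)
    done
qed

lemma fc_diff:
  assumes "in_L2 f" "in_L2 g"
  shows "fc (\<lambda>x. f x - g x) k = fc f k - fc g k"
proof -
  have "fc (\<lambda>x. f x - g x) k = (CLINT x|tmeas. complex_of_real (f x) * cis (- 2 * pi * kdot k x) - complex_of_real (g x) * cis (- 2 * pi * kdot k x))"
    unfolding fc_def by (simp add: algebra_simps)
  also have "\<dots> = fc f k - fc g k"
    unfolding fc_def by (rule Bochner_Integration.integral_diff[OF L2_int[OF assms(1)] L2_int[OF assms(2)]])
  finally show ?thesis .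
qed



definition Sw :: "real \<Rightarrow> (real^'d::finite \<Rightarrow> real) \<Rightarrow> ('d \<Rightarrow> int) \<Rightarrow> real" where
  "Sw s f k = (1 + 4 * pi^2 * knorm2 k) powr s * (cmod (fc f k))^2"

lemma knorm2_nonneg: "knorm2 k \<ge> 0"
  unfolding knorm2_def by (auto intro: sum_nonneg)

lemma wt_ge1: "1 \<le> 1 + 4 * pi^2 * knorm2 k"
  using knorm2_nonneg[of k] by simp

lemma Sw_nonneg: "Sw s f k \<ge> 0"
  unfolding Sw_def by simp

lemma hs_sq_SUP: "hs_sq s f = (SUP F\<in>{F. finite F}. ennreal (sum (Sw s f) F))"
proof -
  have "hs_sq s f = infsum (\<lambda>k. ennreal (Sw s f k)) UNIV"
    unfolding hs_sq_def Sw_def by simp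
  also have "\<dots> = (SUP F\<in>{F. finite F \<and> F \<subseteq> UNIV}. sum (\<lambda>k. ennreal (Sw s f k)) F)"
    by (rule nonneg_infsum_complete) simp
  also have "\<dots> = (SUP F\<in>{F. finite F}. ennreal (sum (Sw s f) F))"
    by (intro SUP_cong refl) (auto simp: sum_ennreal Sw_nonneg)
  finally show ?thesis .
qed

lemma sum_le_hs_sq: "finite F \<Longrightarrow> ennreal (sum (Sw s f) F) \<le> hs_sq s f"
  unfolding hs_sq_SUP by (rule SUP_upper) auto

lemma sum_le_norm2:
  assumes "finite F" "hs_sq s f < \<infinity>"
  shows "sum (Sw s f) F \<le> (hs_norm s f)^2"
proof -
  have "ennreal (sum (Sw s f) F) \<le> hs_sq s f" by (rule sum_le_hs_sq[OF assms(1)])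
  then have "sum (Sw s f) F \<le> enn2real (hs_sq s f)"
    proof -
    have "enn2real (ennreal (sum (Sw s f) F)) \<le> enn2real (hs_sq s f)"
      by (rule enn2real_mono) (use \<open>ennreal (sum (Sw s f) F) \<le> hs_sq s f\<close> assms(2) in auto)
    moreover have "sum (Sw s f) F \<ge> 0" by (rule sum_nonneg) (rule Sw_nonneg)
    ultimately show ?thesis by simp
  qed
  then show ?thesis unfolding hs_norm_def by simp
qed

lemma hs_sq_bound:
  assumes "\<And>F. finite F \<Longrightarrow> sum (Sw s f) F \<le> B"
  shows "hs_sq s f \<le> ennreal B" "hs_sq s f < \<infinity>" "(hs_norm s f)^2 \<le> B"
proof -
  show 1: "hs_sq s f \<le> ennreal B"
    unfolding hs_sq_SUP by (rule SUP_least) (auto intro: ennreal_leI assms)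
  have "ennreal B < \<infinity>" by simp
  then show 2: "hs_sq s f < \<infinity>"
    by (rule le_less_trans[OF 1])
  have B: "B \<ge> 0" using assms[of "{}"] by simp
  have "enn2real (hs_sq s f) \<le> enn2real (ennreal B)"
    by (rule enn2real_mono[OF 1]) simp
  then show "(hs_norm s f)^2 \<le> B" unfolding hs_norm_def using B by simp
qed

lemma hs_sq_approx:
  assumes "hs_sq s f < \<infinity>" "e > 0"
  shows "\<exists>F. finite F \<and> sum (Sw s f) F > (hs_norm s f)^2 - e"
proof (cases "(hs_norm s f)^2 - e < 0")
  case True then show ?thesis by (intro exI[of _ "{}"]) auto
next
  case False
  have eq: "(hs_norm s f)^2 = enn2real (hs_sq s f)" unfolding hs_norm_def by simp
  have "ennreal ((hs_norm s f)^2 - e) < hs_sq s f"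
  proof -
    have "hs_sq s f = ennreal (enn2real (hs_sq s f))"
      using assms(1) by (simp add: ennreal_enn2real_if)
    moreover have "ennreal ((hs_norm s f)^2 - e) < ennreal (enn2real (hs_sq s f))"
    proof (rule ennreal_lessI)
      show "0 < enn2real (hs_sq s f)" using False assms eq by linarith
      show "(hs_norm s f)^2 - e < enn2real (hs_sq s f)" using assms eq by linarith
    qed
    ultimately show ?thesis by simp
  qed
  then obtain F where "finite F" "ennreal ((hs_norm s f)^2 - e) < ennreal (sum (Sw s f) F)"
    unfolding hs_sq_SUP less_SUP_iff by auto
  then show ?thesis using False by (auto simp: ennreal_less_iff)
qed

lemma coeff_le:
  assumes "hs_sq s f < \<infinity>" "s \<ge> 0"
  shows "cmod (fc f k) \<le> hs_norm s f"
proof -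
  have "Sw s f k \<le> (hs_norm s f)^2" using sum_le_norm2[of "{k}" s f] assms by simp
  moreover have "(cmod (fc f k))^2 \<le> Sw s f k"
  proof -
    have "1 \<le> (1 + 4 * pi^2 * knorm2 k) powr s"
      by (rule ge_one_powr_ge_zero[OF wt_ge1 assms(2)])
    then have "1 * (cmod (fc f k))^2 \<le> (1 + 4 * pi^2 * knorm2 k) powr s * (cmod (fc f k))^2"
      by (rule mult_right_mono) simp
    then show ?thesis unfolding Sw_def by simp
  qed
  ultimately have "(cmod (fc f k))^2 \<le> (hs_norm s f)^2" by linarith
  moreover have "hs_norm s f \<ge> 0" unfolding hs_norm_def by simp
  ultimately show ?thesis by (rule power2_le_imp_le)
qed

lemma Sw_mono: "s' \<le> s \<Longrightarrow> Sw s' f k \<le> Sw s f k"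
  unfolding Sw_def
  by (rule mult_right_mono[OF powr_mono[OF _ wt_ge1]]) auto

lemma in_Hs_mono:
  assumes "in_Hs s f" "s' \<le> s"
  shows "in_Hs s' f"
proof -
  have fin: "hs_sq s f < \<infinity>" using assms(1) unfolding in_Hs_def by simp
  have "sum (Sw s' f) F \<le> (hs_norm s f)^2" if "finite F" for F
  proof -
    have "sum (Sw s' f) F \<le> sum (Sw s f) F" by (rule sum_mono) (rule Sw_mono[OF assms(2)])
    also have "\<dots> \<le> (hs_norm s f)^2" by (rule sum_le_norm2[OF that fin])
    finally show ?thesis .
  qed
  then have "hs_sq s' f < \<infinity>" by (rule hs_sq_bound(2))
  then show ?thesis using assms(1) unfolding in_Hs_def by simp
qed

lemma sq_sum_le: "(x + y::real)^2 \<le> 2 * x^2 + 2 * y^2"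
proof -
  have "0 \<le> (x - y)^2" by simp
  then show ?thesis by (simp add: power2_diff power2_sum)
qed

lemma diff_fin:
  assumes "in_Hs s f" "in_Hs s g"
  shows "hs_sq s (\<lambda>x. f x - g x) < \<infinity>"
proof -
  have L: "in_L2 f" "in_L2 g" "hs_sq s f < \<infinity>" "hs_sq s g < \<infinity>" using assms in_Hs_def by auto
  have "sum (Sw s (\<lambda>x. f x - g x)) F \<le> 2 * (hs_norm s f)^2 + 2 * (hs_norm s g)^2" if "finite F" for F
  proof -
    have "Sw s (\<lambda>x. f x - g x) k \<le> 2 * Sw s f k + 2 * Sw s g k" for k
    proof -
      have "(cmod (fc f k - fc g k))^2 \<le> (cmod (fc f k) + cmod (fc g k))^2"
        by (intro power_mono norm_triangle_ineq4) auto
      also have "\<dots> \<le> 2 * (cmod (fc f k))^2 + 2 * (cmod (fc g k))^2"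
        by (rule sq_sum_le)
      finally have "(1 + 4 * pi^2 * knorm2 k) powr s * (cmod (fc f k - fc g k))^2
          \<le> (1 + 4 * pi^2 * knorm2 k) powr s * (2 * (cmod (fc f k))^2 + 2 * (cmod (fc g k))^2)"
        by (rule mult_left_mono) simp
      then show ?thesis unfolding Sw_def fc_diff[OF L(1,2)]
        by (simp add: algebra_simps)
    qed
    then have "sum (Sw s (\<lambda>x. f x - g x)) F \<le> 2 * sum (Sw s f) F + 2 * sum (Sw s g) F"
      by (simp add: sum_distrib_left sum.distrib[symmetric] sum_mono)
    then show ?thesis using sum_le_norm2[OF that L(3)] sum_le_norm2[OF that L(4)] by linarith
  qed
  then show ?thesis by (rule hs_sq_bound(2))
qed

lemma coeff_diff_le:
  assumes "in_Hs s f" "in_Hs s g" "s \<ge> 0"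
  shows "cmod (fc f k - fc g k) \<le> hs_norm s (\<lambda>x. f x - g x)"
proof -
  have "in_L2 f" "in_L2 g" using assms by (auto simp: in_Hs_def)
  then have "fc (\<lambda>x. f x - g x) k = fc f k - fc g k" by (rule fc_diff)
  then show ?thesis using coeff_le[OF diff_fin[OF assms(1,2)] assms(3), of k] by simp
qed



lemma ev_transfer:
  fixes T :: real
  assumes "eventually P (at 0 within {0..T})" "T > 0"
  shows "eventually (\<lambda>t. 0 < t \<and> t \<le> T \<and> P t) (at_right 0)"
proof -
  from assms(1) obtain d where d: "d > 0" "\<forall>x\<in>{0..T}. x \<noteq> 0 \<and> dist x 0 < d \<longrightarrow> P x"
    unfolding eventually_at by blast
  show ?thesis unfolding eventually_at
    by (intro exI[of _ "min d T"]) (use d assms(2) in \<open>auto simp: dist_real_def\<close>)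
qed

lemma tri3: "norm (a - d) \<le> norm (a - b) + norm (b - c) + norm (c - (d::'a::real_normed_vector))"
proof -
  have "a - d = (a - b) + ((b - c) + (c - d))" by simp
  then have "norm (a - d) \<le> norm (a - b) + norm ((b - c) + (c - d))"
    by (metis norm_triangle_ineq)
  also have "norm ((b - c) + (c - d)) \<le> norm (b - c) + norm (c - d)" by (rule norm_triangle_ineq)
  finally show ?thesis by simp
qed

theorem lemma4p13:
  fixes kap eta om gam :: "real^'d::finite \<Rightarrow> real"
    and tau :: "(real^'d) \<times> (real^'d) \<Rightarrow> real"
    and delta up um rt :: real
    and m :: nat and m' :: real
    and rho0 :: "real^'d \<Rightarrow> real" and rho0_low :: real
    and rho :: "real \<Rightarrow> real \<Rightarrow> real^'d \<Rightarrow> real"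
    and T :: real and E :: "real \<Rightarrow> real"
    and epsn :: "nat \<Rightarrow> real" and rhos :: "real \<Rightarrow> real^'d \<Rightarrow> real"
  assumes data_smooth: "smooth_bdd kap" "smooth_bdd eta" "smooth_bdd om" "smooth_bdd gam" "smooth_bdd tau"
    and data_periodic: "periodic1 kap" "periodic1 eta" "periodic1 om" "periodic1 gam" "periodic1 tau"
    and kap_bounds: "\<forall>x. 0 \<le> kap x \<and> kap x \<le> 1"
    and data_nonneg: "\<forall>x. eta x \<ge> 0 \<and> om x \<ge> 0 \<and> gam x \<ge> 0" "\<forall>p. tau p \<ge> 0"
    and tau_int: "\<forall>y. integral\<^sup>L tmeas (\<lambda>x. tau (y, x)) = 1"
    and params: "delta > 0" "0 < um" "um < up" "up < 1" "rt > 0"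
    and m_gt: "real m > real CARD('d) + 3"
    and rho0_Hm: "in_Hs (real m) rho0"
    and rho0_essinf: "AE x in tmeas. rho0 x \<ge> rho0_low"
       "\<forall>c > rho0_low. \<not> (AE x in tmeas. rho0 x \<ge> c)" "rho0_low > 0"
    and T_pos: "T > 0"
    and sol_Hm: "\<forall>eps>0. \<forall>t\<in>{0..T}. in_Hs (real m) (rho eps t)"
    and sol_cont: "\<forall>eps>0. \<forall>t\<in>{0..T}.
          ((\<lambda>s. hs_norm (real m) (\<lambda>x. rho eps s x - rho eps t x)) \<longlongrightarrow> 0) (at t within {0..T})"
    and sol_rhs_Hm: "\<forall>eps>0. \<forall>t\<in>{0..T}.
          in_Hs (real m) (rhs delta up um rt kap eta om gam tau eps (rho eps t))"
    and sol_deriv: "\<forall>eps>0. \<forall>t\<in>{0..T}.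
          ((\<lambda>h. hs_norm (real m) (\<lambda>x. (rho eps (t + h) x - rho eps t x) / h
              - rhs delta up um rt kap eta om gam tau eps (rho eps t) x)) \<longlongrightarrow> 0)
          (at 0 within {h. t + h \<in> {0..T}})"
    and sol_deriv_cont: "\<forall>eps>0. \<forall>t\<in>{0..T}.
          ((\<lambda>s. hs_norm (real m) (\<lambda>x. rhs delta up um rt kap eta om gam tau eps (rho eps s) x
              - rhs delta up um rt kap eta om gam tau eps (rho eps t) x)) \<longlongrightarrow> 0) (at t within {0..T})"
    and sol_init: "\<forall>eps>0. hs_norm (real m) (\<lambda>x. rho eps 0 x - rho0 x) = 0"
    and sol_bdd: "\<exists>B. \<forall>eps>0. \<forall>t\<in>{0..T}. hs_norm (real m) (rho eps t) \<le> B"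
    and sol_lower: "\<forall>eps>0. \<forall>t\<in>{0..T}. AE x in tmeas. rho eps t x \<ge> rho0_low / 2"
    and E_cont: "continuous_on {0..T} E"
    and E_init: "E 0 = (hs_norm (real m) rho0)^2 / 2"
    and energy: "\<forall>eps>0. \<forall>t\<in>{0..T}. (hs_norm (real m) (rho eps t))^2 / 2 \<le> E t"
    and epsn: "\<forall>n. epsn n > 0" "decseq epsn" "epsn \<longlonglongrightarrow> 0"
    and m'_range: "real CARD('d) / 2 < m'" "m' < real m"
    and rhos_L2: "L2Hs T (real m) rhos"
    and weak_conv: "\<forall>g. L2Hs T (real m) g \<longrightarrow>
          (\<lambda>n. LINT t:{0..T}|lborel. hs_inner (real m) (rho (epsn n) t) (g t))
            \<longlonglongrightarrow> (LINT t:{0..T}|lborel. hs_inner (real m) (rhos t) (g t))"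
    and strong_conv: "\<forall>t\<in>{0..T}. in_Hs m' (rhos t)"
       "\<exists>C. C \<longlonglongrightarrow> 0 \<and> (\<forall>n. \<forall>t\<in>{0..T}.
            hs_norm m' (\<lambda>x. rho (epsn n) t x - rhos t x) \<le> C n)"
  shows "in_Hs (real m) (rhos 0) \<and> (\<forall>\<^sub>F t in at_right 0. in_Hs (real m) (rhos t))
     \<and> ((\<lambda>t. hs_norm (real m) (rhos t)) \<longlongrightarrow> hs_norm (real m) rho0) (at_right 0)
     \<and> hs_norm (real m) (rhos 0) = hs_norm (real m) rho0"
proof -
  define r where "r n t = rho (epsn n) t" for n t
  have mpos: "real m \<ge> 0" by simp
  have m'pos: "m' \<ge> 0" using m'_range(1) by linarith
  have rHm: "in_Hs (real m) (r n t)" if "t \<in> {0..T}" for n t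
    using sol_Hm epsn(1) that unfolding r_def by blast
  have rHm': "in_Hs m' (r n t)" if "t \<in> {0..T}" for n t
    using in_Hs_mono[OF rHm[OF that]] m'_range(2) by simp
  have sHm': "in_Hs m' (rhos t)" if "t \<in> {0..T}" for t
    using strong_conv(1) that by blast
  obtain C where C: "C \<longlonglongrightarrow> 0" "\<And>n t. t \<in> {0..T} \<Longrightarrow> hs_norm m' (\<lambda>x. r n t x - rhos t x) \<le> C n"
    using strong_conv(2) unfolding r_def by blast
  have cdiff: "cmod (fc (r n t) k - fc (rhos t) k) \<le> C n" if "t \<in> {0..T}" for n t k
    by (rule order_trans[OF coeff_diff_le[OF rHm'[OF that] sHm'[OF that] m'pos] C(2)[OF that]])
  have coefconv: "(\<lambda>n. fc (r n t) k) \<longlonglongrightarrow> fc (rhos t) k" if "t \<in> {0..T}" for t k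
  proof (rule LIM_zero_cancel, rule Lim_null_comparison[OF _ C(1)])
    show "\<forall>\<^sub>F n in sequentially. norm (fc (r n t) k - fc (rhos t) k) \<le> C n"
      using cdiff[OF that] by simp
  qed
  have sumconv: "(\<lambda>n. sum (Sw (real m) (r n t)) F) \<longlonglongrightarrow> sum (Sw (real m) (rhos t)) F"
    if "t \<in> {0..T}" for t F
    unfolding Sw_def by (intro tendsto_intros coefconv[OF that])
  have bound: "sum (Sw (real m) (rhos t)) F \<le> 2 * E t" if "t \<in> {0..T}" "finite F" for t F
  proof (rule LIMSEQ_le_const2[OF sumconv[OF that(1)]], intro exI allI impI)
    fix n :: nat
    have "hs_sq (real m) (r n t) < \<infinity>" using rHm[OF that(1)] unfolding in_Hs_def by simp
    then have "sum (Sw (real m) (r n t)) F \<le> (hs_norm (real m) (r n t))^2"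
      by (rule sum_le_norm2[OF that(2)])
    also have "\<dots> \<le> 2 * E t"
    proof -
      have "(hs_norm (real m) (rho (epsn n) t))^2 / 2 \<le> E t" using energy epsn(1) that(1) by blast
      then show ?thesis unfolding r_def by simp
    qed
    finally show "sum (Sw (real m) (r n t)) F \<le> 2 * E t" .
  qed
  have HmS: "in_Hs (real m) (rhos t)" "(hs_norm (real m) (rhos t))^2 \<le> 2 * E t"
    if "t \<in> {0..T}" for t
  proof -
    have "hs_sq (real m) (rhos t) < \<infinity>" by (rule hs_sq_bound(2)[OF bound[OF that]])
    then show "in_Hs (real m) (rhos t)" using sHm'[OF that] unfolding in_Hs_def by simp
    show "(hs_norm (real m) (rhos t))^2 \<le> 2 * E t" by (rule hs_sq_bound(3)[OF bound[OF that]])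
  qed
  have T0: "0 \<in> {0..T}" using T_pos by simp
  have coef0: "fc (rhos 0) k = fc rho0 k" for k
  proof -
    have "fc (r n 0) k = fc rho0 k" for n
    proof -
      have "cmod (fc (r n 0) k - fc rho0 k) \<le> hs_norm (real m) (\<lambda>x. r n 0 x - rho0 x)"
        by (rule coeff_diff_le[OF rHm[OF T0] rho0_Hm mpos])
      also have "\<dots> = 0" using sol_init epsn(1) unfolding r_def by blast
      finally show ?thesis by simp
    qed
    then have "(\<lambda>n. fc (r n 0) k) = (\<lambda>n. fc rho0 k)" by simp
    then have "(\<lambda>n. fc (r n 0) k) \<longlonglongrightarrow> fc rho0 k" by simp
    then show ?thesis using coefconv[OF T0, where k=k] LIMSEQ_unique by blast
  qed
  have norm0: "hs_norm (real m) (rhos 0) = hs_norm (real m) rho0"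
    unfolding hs_norm_def hs_sq_def coef0 ..
  have sq0: "hs_sq (real m) (rhos 0) = hs_sq (real m) rho0"
    unfolding hs_sq_def coef0 ..
  have contcoef: "((\<lambda>t. fc (rhos t) k) \<longlongrightarrow> fc (rhos 0) k) (at_right 0)" for k
  proof (rule tendstoI)
    fix e :: real assume e: "e > 0"
    have "\<forall>\<^sub>F n in sequentially. C n < e / 3" using order_tendstoD(2)[OF C(1), of "e/3"] e by simp
    then obtain N where "\<forall>n\<ge>N. C n < e / 3" unfolding eventually_sequentially by blast
    then have n: "C N < e / 3" by simp
    define n where "n = N"
    with n have n: "C n < e / 3" by simp
    have "((\<lambda>s. hs_norm (real m) (\<lambda>x. r n s x - r n 0 x)) \<longlongrightarrow> 0) (at 0 within {0..T})"
      using sol_cont epsn(1) T0 unfolding r_def by blast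
    then have "\<forall>\<^sub>F s in at 0 within {0..T}. hs_norm (real m) (\<lambda>x. r n s x - r n 0 x) < e / 3"
      using e by (intro order_tendstoD(2)) auto
    from ev_transfer[OF this T_pos]
    show "\<forall>\<^sub>F t in at_right 0. dist (fc (rhos t) k) (fc (rhos 0) k) < e"
    proof (rule eventually_mono)
      fix t assume t: "0 < t \<and> t \<le> T \<and> hs_norm (real m) (\<lambda>x. r n t x - r n 0 x) < e / 3"
      then have tT: "t \<in> {0..T}" by simp
      have "dist (fc (rhos t) k) (fc (rhos 0) k) = cmod (fc (rhos t) k - fc (rhos 0) k)"
        by (simp add: dist_norm)
      also have "\<dots> \<le> cmod (fc (rhos t) k - fc (r n t) k) + cmod (fc (r n t) k - fc (r n 0) k)
          + cmod (fc (r n 0) k - fc (rhos 0) k)" by (rule tri3)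
      also have "\<dots> < e"
      proof -
        have "cmod (fc (rhos t) k - fc (r n t) k) \<le> C n"
          using cdiff[OF tT, where n=n and k=k] by (simp add: norm_minus_commute)
        moreover have "cmod (fc (r n 0) k - fc (rhos 0) k) \<le> C n" by (rule cdiff[OF T0])
        moreover have "cmod (fc (r n t) k - fc (r n 0) k) \<le> hs_norm (real m) (\<lambda>x. r n t x - r n 0 x)"
          by (rule coeff_diff_le[OF rHm[OF tT] rHm[OF T0] mpos])
        ultimately show ?thesis using t n by linarith
      qed
      finally show "dist (fc (rhos t) k) (fc (rhos 0) k) < e" .
    qed
  qed
  have sumcont: "((\<lambda>t. sum (Sw (real m) (rhos t)) F) \<longlongrightarrow> sum (Sw (real m) (rhos 0)) F) (at_right 0)"
    for F
    unfolding Sw_def by (intro tendsto_intros contcoef)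
  have evT: "\<forall>\<^sub>F t in at_right 0. 0 < t \<and> t \<le> T \<and> True"
    by (rule ev_transfer[OF _ T_pos]) simp
  have fin0: "hs_sq (real m) (rhos 0) < \<infinity>" using HmS(1)[OF T0] unfolding in_Hs_def by simp
  have Nlim: "((\<lambda>t. (hs_norm (real m) (rhos t))^2) \<longlongrightarrow> (hs_norm (real m) rho0)^2) (at_right 0)"
  proof (rule order_tendstoI)
    fix a assume a: "a < (hs_norm (real m) rho0)^2"
    obtain F where F: "finite F" "sum (Sw (real m) (rhos 0)) F > (hs_norm (real m) (rhos 0))^2 - ((hs_norm (real m) rho0)^2 - a)"
      using hs_sq_approx[OF fin0, of "(hs_norm (real m) rho0)^2 - a"] a by auto
    have "a < sum (Sw (real m) (rhos 0)) F" using F(2) norm0 by simp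
    from order_tendstoD(1)[OF sumcont this]
    have "\<forall>\<^sub>F t in at_right 0. a < sum (Sw (real m) (rhos t)) F" .
    with evT show "\<forall>\<^sub>F t in at_right 0. a < (hs_norm (real m) (rhos t))^2"
    proof (rule eventually_elim2)
      fix t assume t: "0 < t \<and> t \<le> T \<and> True" "a < sum (Sw (real m) (rhos t)) F"
      then have tT: "t \<in> {0..T}" by simp
      have "hs_sq (real m) (rhos t) < \<infinity>" using HmS(1)[OF tT] unfolding in_Hs_def by simp
      from sum_le_norm2[OF F(1) this] t(2) show "a < (hs_norm (real m) (rhos t))^2" by linarith
    qed
  next
    fix a assume a: "a > (hs_norm (real m) rho0)^2"
    have "(E \<longlongrightarrow> E 0) (at 0 within {0..T})"
      using E_cont T0 unfolding continuous_on_def by blast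
    moreover have "E 0 < a / 2" using a E_init by simp
    ultimately have "\<forall>\<^sub>F t in at 0 within {0..T}. E t < a / 2" by (rule order_tendstoD(2))
    from ev_transfer[OF this T_pos]
    show "\<forall>\<^sub>F t in at_right 0. (hs_norm (real m) (rhos t))^2 < a"
    proof (rule eventually_mono)
      fix t assume t: "0 < t \<and> t \<le> T \<and> E t < a / 2"
      then have tT: "t \<in> {0..T}" by simp
      show "(hs_norm (real m) (rhos t))^2 < a" using HmS(2)[OF tT] t by linarith
    qed
  qed
  have nn: "hs_norm (real m) f \<ge> 0" for f :: "real^'d \<Rightarrow> real" unfolding hs_norm_def by simp
  have "((\<lambda>t. sqrt ((hs_norm (real m) (rhos t))^2)) \<longlongrightarrow> sqrt ((hs_norm (real m) rho0)^2)) (at_right 0)"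
    by (rule tendsto_real_sqrt[OF Nlim])
  then have lim: "((\<lambda>t. hs_norm (real m) (rhos t)) \<longlongrightarrow> hs_norm (real m) rho0) (at_right 0)"
    using nn by simp
  have evHs: "\<forall>\<^sub>F t in at_right 0. in_Hs (real m) (rhos t)"
    using evT by (rule eventually_mono) (auto intro: HmS(1))
  show ?thesis using HmS(1)[OF T0] evHs lim norm0 by blast
qed


end
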